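(* Let $n\ge 1$ and $k\ge 3$ be integers and $p:=k-2$. Let $\{v_1,\dots,v_n\}$ be an orthonormal basis of $\mathbb{R}^n$ and $\lambda_r,\kappa_r\in\mathbb{R}$ for $r=1,\dots,n$, with $\kappa_r<0$ for all $r$. Let $\mathcal A=\sum_{r=1}^n\lambda_r v_r^{\otimes k}$, $K=\sum_{r=1}^n\kappa_r v_rv_r^\top$, and consider $\dot x=Kx+\mathcal A x^{k-1}$ on $\mathbb{R}^n$. Let $\mathcal I_+:=\{r:\lambda_r>0\}$ and $\mathcal I_-:=\{r:\lambda_r<0\}$. For $r\in\mathcal I_+$ let $c_r:=(-\kappa_r/\lambda_r)^{1/p}>0$, and, when $p$ is odd, for $r\in\mathcal I_-$ let $c_r:=-(\kappa_r/\lambda_r)^{1/p}<0$ (the real $p$-th root of $-\kappa_r/\lambda_r$). (i) If $p$ is even, let $\mathcal R_{\mathrm{even}}:=\{x_0\in\mathbb{R}^n: |v_r^\top x_0|<c_r\ \forall r\in\mathcal I_+\}$. Then for every $x(0)=x_0\in\mathcal R_{\mathrm{even}}$, the solution exists for all $t\ge 0$, satisfies $\lim_{t\to\infty}x(t)=0$, and $\mathcal R_{\mathrm{even}}$ is forward invariant. (ii) If $p$ is odd, let $\mathcal R_{\mathrm{odd}}:=\{x_0\in\mathbb{R}^n: v_r^\top x_0<c_r\ \forall r\in\mathcal I_+,\ v_r^\top x_0>c_r\ \forall r\in\mathcal I_-\}$. Then for every $x(0)=x_0\in\mathcal R_{\mathrm{odd}}$, the solution exists for all $t\ge 0$, satisfies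 $\lim_{t\to\infty}x(t)=0$, and $\mathcal R_{\mathrm{odd}}$ is forward invariant.
   Context: For $v\in\mathbb{R}^n$, $v^{\otimes k}$ is the $k$th-order tensor with entries $(v^{\otimes k})_{i_1\cdots i_k}=v_{i_1}\cdots v_{i_k}$. For a $k$th-order tensor $\mathcal A=(a_{i_1\cdots i_k})$ and $x\in\mathbb{R}^n$, $(\mathcal A x^{k-1})_i=\sum_{i_2,\dots,i_k=1}^n a_{i i_2\cdots i_k}x_{i_2}\cdots x_{i_k}$. *)

theory Defs
  imports "HOL-Analysis.Analysis"
begin

text \<open>A k-th order tensor on R^n is represented by its entry function on index lists
  (only lists of length k are relevant). Indices range over the finite type 'n.\<close>

definition tensor_power :: "real^'n \<Rightarrow> ('n list \<Rightarrow> real)" where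
  "tensor_power v = (\<lambda>is. prod_list (map (\<lambda>i. v $ i) is))"

definition tensor_apply :: "nat \<Rightarrow> ('n::finite list \<Rightarrow> real) \<Rightarrow> real^'n \<Rightarrow> real^'n" where
  "tensor_apply k A x =
     (\<chi> i. \<Sum>js\<in>{js. length js = k - 1}. A (i # js) * prod_list (map (\<lambda>j. x $ j) js))"

definition outer :: "real^'n \<Rightarrow> real^'n \<Rightarrow> real^'n^'n" where
  "outer u w = (\<chi> i j. u $ i * w $ j)"

definition is_forward_solution :: "(real^'n \<Rightarrow> real^'n) \<Rightarrow> real^'n \<Rightarrow> (real \<Rightarrow> real^'n) \<Rightarrow> bool" where
  "is_forward_solution F x0 x \<longleftrightarrow> x 0 = x0 \<and>
     (\<forall>t\<ge>0. (x has_vector_derivative F (x t)) (at t within {0..}))"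

end

theory Submission
  imports Defs
begin


lemma sum_lists_prod:
  fixes f :: "'n::finite \<Rightarrow> real"
  shows "(\<Sum>js\<in>{js::'n list. length js = m}. prod_list (map f js)) = (\<Sum>j\<in>UNIV. f j) ^ m"
proof (induction m)
  case 0
  then show ?case by simp
next
  case (Suc m)
  have eq: "{js::'n list. length js = Suc m} = (\<lambda>(j,js). j#js) ` (UNIV \<times> {js. length js = m})"
    by (auto simp: image_def length_Suc_conv)
  have inj: "inj_on (\<lambda>(j,js). j#js) (UNIV \<times> {js::'n list. length js = m})"
    by (auto simp: inj_on_def)
  have "(\<Sum>js\<in>{js::'n list. length js = Suc m}. prod_list (map f js))
      = (\<Sum>(j,js)\<in>UNIV \<times> {js::'n list. length js = m}. f j * prod_list (map f js))"
    unfolding eq by (subst sum.reindex[OF inj]) (simp add: case_prod_unfold)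
  also have "\<dots> = (\<Sum>j\<in>UNIV. f j) * (\<Sum>js\<in>{js::'n list. length js = m}. prod_list (map f js))"
    by (simp add: sum_product sum.cartesian_product)
  finally show ?case using Suc by simp
qed

lemma prod_list_map_mult:
  "prod_list (map (\<lambda>j. f j * g j) js) = prod_list (map f js) * (prod_list (map g js) :: real)"
  by (induction js) (auto simp: mult_ac)

lemma matrix_part:
  fixes v :: "'n::finite \<Rightarrow> real^'n"
  shows "(\<Sum>r\<in>UNIV. kap r *\<^sub>R outer (v r) (v r)) *v x = (\<Sum>r\<in>UNIV. (kap r * (v r \<bullet> x)) *\<^sub>R v r)"
proof -
  have "((\<Sum>r\<in>UNIV. kap r *\<^sub>R outer (v r) (v r)) *v x) $ i = ((\<Sum>r\<in>UNIV. (kap r * (v r \<bullet> x)) *\<^sub>R v r)) $ i" for i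
  proof -
    have "((\<Sum>r\<in>UNIV. kap r *\<^sub>R outer (v r) (v r)) *v x) $ i
        = (\<Sum>j\<in>UNIV. (\<Sum>r\<in>UNIV. kap r * (v r $ i * v r $ j)) * x $ j)"
      by (simp only: matrix_vector_mult_def outer_def sum_component vector_scaleR_component vec_lambda_beta real_scaleR_def)
    also have "\<dots> = (\<Sum>j\<in>UNIV. \<Sum>r\<in>UNIV. kap r * (v r $ i * v r $ j) * x $ j)"
      by (simp only: sum_distrib_right)
    also have "\<dots> = (\<Sum>r\<in>UNIV. \<Sum>j\<in>UNIV. kap r * (v r $ i * v r $ j) * x $ j)"
      by (rule sum.swap)
    also have "\<dots> = (\<Sum>r\<in>UNIV. (kap r * (\<Sum>j\<in>UNIV. v r $ j * x $ j)) * v r $ i)"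
      by (rule sum.cong[OF refl]) (simp add: sum_distrib_left sum_distrib_right mult_ac)
    also have "\<dots> = ((\<Sum>r\<in>UNIV. (kap r * (v r \<bullet> x)) *\<^sub>R v r)) $ i"
      by (simp only: sum_component vector_scaleR_component inner_vec_def real_scaleR_def inner_real_def)
    finally show ?thesis .
  qed
  then show ?thesis by (simp add: vec_eq_iff)
qed

lemma tensor_part:
  fixes v :: "'n::finite \<Rightarrow> real^'n"
  assumes "k \<ge> 1"
  shows "tensor_apply k (\<lambda>is. \<Sum>r\<in>UNIV. lam r * tensor_power (v r) is) x
     = (\<Sum>r\<in>UNIV. (lam r * (v r \<bullet> x) ^ (k - 1)) *\<^sub>R v r)"
proof -
  have "tensor_apply k (\<lambda>is. \<Sum>r\<in>UNIV. lam r * tensor_power (v r) is) x $ i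
     = (\<Sum>r\<in>UNIV. (lam r * (v r \<bullet> x) ^ (k - 1)) *\<^sub>R v r) $ i" for i
  proof -
    have A: "(\<Sum>r\<in>UNIV. lam r * tensor_power (v r) (i # js)) * prod_list (map (\<lambda>j. x $ j) js)
       = (\<Sum>r\<in>UNIV. lam r * v r $ i * prod_list (map (\<lambda>j. v r $ j * x $ j) js))" for js
    proof -
      have "(\<Sum>r\<in>UNIV. lam r * tensor_power (v r) (i # js)) * prod_list (map (\<lambda>j. x $ j) js)
         = (\<Sum>r\<in>UNIV. lam r * v r $ i * (prod_list (map (\<lambda>j. v r $ j) js) * prod_list (map (\<lambda>j. x $ j) js)))"
        unfolding tensor_power_def sum_distrib_right by (rule sum.cong) (simp_all add: mult_ac)
      then show ?thesis by (simp only: prod_list_map_mult)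
    qed
    have "tensor_apply k (\<lambda>is. \<Sum>r\<in>UNIV. lam r * tensor_power (v r) is) x $ i
      = (\<Sum>js\<in>{js. length js = k - 1}. \<Sum>r\<in>UNIV. lam r * v r $ i * prod_list (map (\<lambda>j. v r $ j * x $ j) js))"
      unfolding tensor_apply_def vec_lambda_beta by (rule sum.cong[OF refl], rule A)
    also have "\<dots> = (\<Sum>r\<in>UNIV. lam r * v r $ i * (\<Sum>js\<in>{js. length js = k - 1}. prod_list (map (\<lambda>j. v r $ j * x $ j) js)))"
      by (simp add: sum.swap[where B=UNIV] sum_distrib_left)
    also have "\<dots> = (\<Sum>r\<in>UNIV. (lam r * (v r \<bullet> x) ^ (k - 1)) *\<^sub>R v r) $ i"
      by (simp add: sum_lists_prod inner_vec_def sum_component mult_ac)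
    finally show ?thesis .
  qed
  then show ?thesis by (simp add: vec_eq_iff)
qed



lemma sum_delta_mult:
  fixes a :: "'n::finite \<Rightarrow> real"
  shows "(\<Sum>r\<in>UNIV. a r * (if s = r then 1 else 0)) = a s"
proof -
  have "(\<Sum>r\<in>UNIV. a r * (if s = r then 1 else 0)) = (\<Sum>r\<in>UNIV. if s = r then a r else 0)"
    by (rule sum.cong) auto
  then show ?thesis by simp
qed

lemma inner_orth_sum:
  fixes v :: "'n::finite \<Rightarrow> real^'n"
  assumes orth: "\<forall>r s. v r \<bullet> v s = (if r = s then 1 else 0)"
  shows "v s \<bullet> (\<Sum>r\<in>UNIV. a r *\<^sub>R v r) = a s"
proof -
  have "v s \<bullet> (\<Sum>r\<in>UNIV. a r *\<^sub>R v r) = (\<Sum>r\<in>UNIV. a r * (if s = r then 1 else 0))"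
    by (simp add: inner_sum_right orth)
  then show ?thesis by (simp only: sum_delta_mult)
qed

lemma orth_expand:
  fixes v :: "'n::finite \<Rightarrow> real^'n"
  assumes orth: "\<forall>r s. v r \<bullet> v s = (if r = s then 1 else 0)"
  shows "x = (\<Sum>r\<in>UNIV. (v r \<bullet> x) *\<^sub>R v r)"
proof -
  define V :: "real^'n^'n" where "V = (\<chi> r. v r)"
  have "V ** transpose V = mat 1"
    using orth by (simp add: V_def vec_eq_iff matrix_matrix_mult_def transpose_def mat_def inner_vec_def mult.commute)
  then have T: "transpose V ** V = mat 1" by (rule matrix_left_right_inverse[THEN iffD1])
  have T': "(\<Sum>r\<in>UNIV. v r $ i * v r $ j) = (if i = j then 1 else 0)" for i j
    using T[unfolded vec_eq_iff, rule_format, of i, unfolded vec_eq_iff, rule_format, of j]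
    by (simp add: V_def matrix_matrix_mult_def transpose_def mat_def)
  have "(\<Sum>r\<in>UNIV. (v r \<bullet> x) *\<^sub>R v r) $ i = x $ i" for i
  proof -
    have "(\<Sum>r\<in>UNIV. (v r \<bullet> x) *\<^sub>R v r) $ i = (\<Sum>r\<in>UNIV. \<Sum>j\<in>UNIV. v r $ j * x $ j * v r $ i)"
      by (simp add: sum_component inner_vec_def sum_distrib_right)
    also have "\<dots> = (\<Sum>j\<in>UNIV. x $ j * (\<Sum>r\<in>UNIV. v r $ i * v r $ j))"
      by (subst sum.swap) (simp add: sum_distrib_left mult_ac)
    also have "\<dots> = x $ i" using sum_delta_mult[of "\<lambda>j. x $ j" i] by (simp add: T')
    finally show ?thesis .
  qed
  then show ?thesis by (simp add: vec_eq_iff)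
qed



lemma region_even:
  fixes kap lam y :: real
  assumes "kap < 0" "even p" "p \<ge> 1"
  shows "(lam > 0 \<longrightarrow> \<bar>y\<bar> < root p (- kap / lam)) \<longleftrightarrow> lam / kap * y ^ p > -1"
proof (cases "lam > 0")
  case True
  have c0: "0 \<le> - kap / lam" using assms True by (intro divide_nonneg_pos) auto
  have c: "root p (- kap / lam) ^ p = - kap / lam"
    using real_root_pow_pos2[OF _ c0] assms by simp
  have "\<bar>y\<bar> < root p (- kap / lam) \<longleftrightarrow> root p (\<bar>y\<bar> ^ p) < root p (root p (- kap / lam) ^ p)"
    using assms by (subst c) (simp add: real_root_power_cancel)
  also have "\<dots> \<longleftrightarrow> \<bar>y\<bar> ^ p < - kap / lam" using assms c by simp
  also have "\<dots> \<longleftrightarrow> y ^ p < - kap / lam" using assms by (simp add: power_even_abs)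
  also have "\<dots> \<longleftrightarrow> lam / kap * y ^ p > -1" using assms True
    by (simp add: field_simps)
  finally show ?thesis using True by simp
next
  case False
  have "lam / kap * y ^ p \<ge> 0" using assms False
    by (intro mult_nonneg_nonneg) (auto simp: divide_nonpos_neg zero_le_even_power)
  then show ?thesis using False by simp
qed

lemma region_odd:
  fixes kap lam y :: real
  assumes "kap < 0" "odd p"
  shows "((lam > 0 \<longrightarrow> y < root p (- kap / lam)) \<and> (lam < 0 \<longrightarrow> y > - root p (kap / lam)))
     \<longleftrightarrow> lam / kap * y ^ p > -1"
proof -
  have p0: "p > 0" using assms by (cases p) auto
  have mono: "a < b \<longleftrightarrow> a ^ p < b ^ p" for a b :: real
  proof -
    have "a < b \<longleftrightarrow> root p (a ^ p) < root p (b ^ p)" using assms by (simp add: odd_real_root_power_cancel)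
    also have "\<dots> \<longleftrightarrow> a ^ p < b ^ p" using p0 by simp
    finally show ?thesis .
  qed
  consider "lam > 0" | "lam < 0" | "lam = 0" by linarith
  then show ?thesis
  proof cases
    case 1
    have "y < root p (- kap / lam) \<longleftrightarrow> y ^ p < - kap / lam"
      using mono[of y "root p (- kap / lam)"] assms by (simp add: odd_real_root_pow)
    also have "\<dots> \<longleftrightarrow> lam / kap * y ^ p > -1" using assms 1 by (simp add: field_simps)
    finally show ?thesis using 1 by simp
  next
    case 2
    have "- root p (kap / lam) = root p (- kap / lam)" by (simp add: real_root_minus)
    then have "y > - root p (kap / lam) \<longleftrightarrow> y ^ p > - kap / lam"
      using mono[of "root p (- kap / lam)" y] assms by (simp add: odd_real_root_pow)
    also have "\<dots> \<longleftrightarrow> lam / kap * y ^ p > -1" using assms 2 by (simp add: field_simps)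
    finally show ?thesis using 2 by simp
  next
    case 3
    then show ?thesis by simp
  qed
qed



lemma exp_neg_lim:
  fixes c :: real assumes "c < 0"
  shows "((\<lambda>t. exp (c * t)) \<longlongrightarrow> 0) at_top"
  using assms by real_asymp

lemma pow_diff_bound:
  fixes a b M :: real
  assumes "\<bar>a\<bar> \<le> M" "\<bar>b\<bar> \<le> M"
  shows "\<bar>a ^ n - b ^ n\<bar> \<le> real n * M ^ (n - 1) * \<bar>a - b\<bar>"
proof (induction n)
  case 0 then show ?case by simp
next
  case (Suc n)
  have M0: "M \<ge> 0" using assms by linarith
  have "a ^ Suc n - b ^ Suc n = a * (a ^ n - b ^ n) + (a - b) * b ^ n" by (simp add: algebra_simps)
  then have "\<bar>a ^ Suc n - b ^ Suc n\<bar> \<le> \<bar>a\<bar> * \<bar>a ^ n - b ^ n\<bar> + \<bar>a - b\<bar> * \<bar>b\<bar> ^ n"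
    by (metis abs_mult abs_triangle_ineq power_abs)
  also have "\<dots> \<le> M * (real n * M ^ (n - 1) * \<bar>a - b\<bar>) + \<bar>a - b\<bar> * M ^ n"
    using Suc assms M0 by (intro add_mono mult_mono power_mono) auto
  also have "\<dots> = real (Suc n) * M ^ (Suc n - 1) * \<bar>a - b\<bar>"
    by (cases n) (auto simp: algebra_simps)
  finally show ?case .
qed

lemma within_to_at:
  assumes "(f has_real_derivative d) (at s within {0..})" "s > 0"
  shows "(f has_real_derivative d) (at s)"
proof -
  have sub: "{0<..} \<subseteq> {0::real..}" by auto
  have "(f has_real_derivative d) (at s within {0<..})"
    using DERIV_subset[OF assms(1) sub] .
  then show ?thesis using at_within_open[of s "{0<..}"] assms(2) by simp
qed

lemma scalar_unique:
  fixes kap lam :: real and y z :: "real \<Rightarrow> real"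
  assumes y: "\<forall>t\<ge>0. (y has_real_derivative (kap * y t + lam * y t ^ (p+1))) (at t within {0..})"
    and z: "\<forall>t\<ge>0. (z has_real_derivative (kap * z t + lam * z t ^ (p+1))) (at t within {0..})"
    and y0: "y 0 = z 0" and T0: "T \<ge> 0"
  shows "y T = z T"
proof -
  define g where "g = (\<lambda>u::real. kap * u + lam * u ^ (p+1))"
  have cy: "continuous_on {0..T} y"
    by (rule DERIV_continuous_on[where D="\<lambda>t. g (y t)"]) (use y in \<open>auto simp: g_def intro: DERIV_subset\<close>)
  have cz: "continuous_on {0..T} z"
    by (rule DERIV_continuous_on[where D="\<lambda>t. g (z t)"]) (use z in \<open>auto simp: g_def intro: DERIV_subset\<close>)
  obtain My where My: "\<forall>s\<in>{0..T}. \<bar>y s\<bar> \<le> My"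
    using compact_imp_bounded[OF compact_continuous_image[OF cy compact_Icc]] unfolding bounded_real by auto
  obtain Mz where Mz: "\<forall>s\<in>{0..T}. \<bar>z s\<bar> \<le> Mz"
    using compact_imp_bounded[OF compact_continuous_image[OF cz compact_Icc]] unfolding bounded_real by auto
  define M where "M = max My Mz"
  have yM: "\<bar>y s\<bar> \<le> M" and zM: "\<bar>z s\<bar> \<le> M" if "s \<in> {0..T}" for s
    using My Mz that by (auto simp: M_def le_max_iff_disj)
  define L where "L = \<bar>kap\<bar> + \<bar>lam\<bar> * real (p+1) * M ^ p"
  have L0: "L \<ge> 0" using yM[of 0] T0 by (auto simp: L_def)
  have lip: "\<bar>g a - g b\<bar> \<le> L * \<bar>a - b\<bar>" if "\<bar>a\<bar> \<le> M" "\<bar>b\<bar> \<le> M" for a b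
  proof -
    have "g a - g b = kap * (a - b) + lam * (a ^ (p+1) - b ^ (p+1))" by (simp add: g_def algebra_simps)
    then have "\<bar>g a - g b\<bar> \<le> \<bar>kap\<bar> * \<bar>a - b\<bar> + \<bar>lam\<bar> * \<bar>a ^ (p+1) - b ^ (p+1)\<bar>"
      by (metis abs_mult abs_triangle_ineq)
    also have "\<dots> \<le> \<bar>kap\<bar> * \<bar>a - b\<bar> + \<bar>lam\<bar> * (real (p+1) * M ^ p * \<bar>a - b\<bar>)"
      using pow_diff_bound[OF that, of "p+1"] by (intro add_left_mono mult_left_mono) auto
    also have "\<dots> = L * \<bar>a - b\<bar>" by (simp add: L_def algebra_simps)
    finally show ?thesis .
  qed
  define phi where "phi = (\<lambda>s. (y s - z s)^2 * exp (- 2 * L * s))"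
  have "phi T \<le> phi 0"
  proof (rule DERIV_nonpos_imp_decreasing_open[OF T0])
    fix s assume s: "0 < s" "s < T"
    have dy: "(y has_real_derivative g (y s)) (at s)"
      using within_to_at[of y _ s] y s by (auto simp: g_def)
    have dz: "(z has_real_derivative g (z s)) (at s)"
      using within_to_at[of z _ s] z s by (auto simp: g_def)
    have "(phi has_real_derivative
       (2 * (y s - z s) * (g (y s) - g (z s))) * exp (- 2 * L * s) + (y s - z s)^2 * (exp (- 2 * L * s) * (- 2 * L))) (at s)"
      unfolding phi_def
      by (auto intro!: derivative_eq_intros dy dz simp: power2_eq_square algebra_simps)
    moreover have "(2 * (y s - z s) * (g (y s) - g (z s))) * exp (- 2 * L * s) + (y s - z s)^2 * (exp (- 2 * L * s) * (- 2 * L)) \<le> 0"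
    proof -
      have "(y s - z s) * (g (y s) - g (z s)) \<le> \<bar>y s - z s\<bar> * \<bar>g (y s) - g (z s)\<bar>"
        by (metis abs_ge_self abs_mult)
      also have "\<dots> \<le> \<bar>y s - z s\<bar> * (L * \<bar>y s - z s\<bar>)"
        using s by (intro mult_left_mono lip yM zM) auto
      also have "\<dots> = L * (y s - z s)^2" by (simp add: power2_eq_square abs_mult_self_eq algebra_simps)
      finally have "(y s - z s) * (g (y s) - g (z s)) - L * (y s - z s)^2 \<le> 0" by simp
      then have "2 * exp (- 2 * L * s) * ((y s - z s) * (g (y s) - g (z s)) - L * (y s - z s)^2) \<le> 0"
        by (intro mult_nonneg_nonpos) auto
      then show ?thesis by (simp add: algebra_simps)
    qed
    ultimately show "\<exists>d. (phi has_real_derivative d) (at s) \<and> d \<le> 0" by blast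
  next
    show "continuous_on {0..T} phi" unfolding phi_def
      by (intro continuous_intros cy cz)
  qed
  then have "(y T - z T)^2 * exp (- 2 * L * T) \<le> 0" using y0 by (simp add: phi_def)
  then have "(y T - z T)^2 \<le> 0" by (simp add: mult_le_0_iff)
  then show ?thesis by simp
qed

lemma scalar_sol:
  fixes kap lam y0 :: real and p :: nat
  assumes kap: "kap < 0" and p: "p \<ge> 1" and A: "lam / kap * y0 ^ p > -1"
  shows "\<exists>z. z 0 = y0 \<and> (\<forall>t\<ge>0. (z has_real_derivative (kap * z t + lam * z t ^ (p+1))) (at t))
          \<and> (z \<longlongrightarrow> 0) at_top \<and> (\<forall>t\<ge>0. lam / kap * z t ^ p > -1)"
proof -
  define a where "a = lam / kap * y0 ^ p"
  define E where "E = (\<lambda>t. exp (real p * kap * t))"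
  define D where "D = (\<lambda>t. 1 + a * (1 - E t))"
  define z where "z = (\<lambda>t. y0 * exp (kap * t) * D t powr (- 1 / real p))"
  have Epos: "E t > 0" for t by (simp add: E_def)
  have Ele: "E t \<le> 1" if "t \<ge> 0" for t
    using that kap by (simp add: E_def mult_nonpos_nonneg mult_nonneg_nonpos)
  have Dpos: "D t > 0" if "t \<ge> 0" for t
  proof (cases "a \<ge> 0")
    case True
    then have "a * E t \<le> a * 1" using Ele[OF that] by (intro mult_left_mono) auto
    then show ?thesis by (simp add: D_def algebra_simps)
  next
    case False
    then have "a * E t \<le> 0" using Epos[of t] by (simp add: mult_nonpos_nonneg)
    moreover have "a > -1" using A by (simp add: a_def)
    ultimately show ?thesis by (simp add: D_def algebra_simps)
  qed
  have ak: "a * kap = lam * y0 ^ p" using kap by (simp add: a_def)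
  have zp: "z t ^ p = y0 ^ p * E t / D t" if "t \<ge> 0" for t
  proof -
    have "(D t powr (- 1 / real p)) ^ p = D t powr (real p * (- 1 / real p))"
      using Dpos[OF that] by (simp add: powr_power)
    also have "\<dots> = inverse (D t)" using p Dpos[OF that] by (simp add: powr_minus)
    finally have 1: "(D t powr (- 1 / real p)) ^ p = inverse (D t)" .
    have 2: "exp (kap * t) ^ p = E t" by (simp add: E_def exp_of_nat_mult[symmetric] mult_ac)
    show ?thesis unfolding z_def power_mult_distrib 1 2 by (simp add: field_simps)
  qed
  have deriv: "(z has_real_derivative (kap * z t + lam * z t ^ (p+1))) (at t)" if t: "t \<ge> 0" for t
  proof -
    have dD: "(D has_real_derivative (- a * (real p * kap * E t))) (at t)"
      unfolding D_def E_def by (auto intro!: derivative_eq_intros)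
    have dW: "((\<lambda>t. D t powr (- 1 / real p)) has_real_derivative
         D t powr (- 1 / real p) * (0 * ln (D t) + (- a * (real p * kap * E t)) * (- 1 / real p) / D t)) (at t)"
      by (rule DERIV_powr[OF dD Dpos[OF t] DERIV_const])
    have dX: "((\<lambda>t. y0 * exp (kap * t)) has_real_derivative y0 * (kap * exp (kap * t))) (at t)"
      by (auto intro!: derivative_eq_intros)
    have "(z has_real_derivative (y0 * (kap * exp (kap * t))) * D t powr (- 1 / real p)
          + (D t powr (- 1 / real p) * (0 * ln (D t) + (- a * (real p * kap * E t)) * (- 1 / real p) / D t)) * (y0 * exp (kap * t))) (at t)"
      unfolding z_def by (rule DERIV_mult[OF dX dW])
    moreover have "(y0 * (kap * exp (kap * t))) * D t powr (- 1 / real p)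
          + (D t powr (- 1 / real p) * (0 * ln (D t) + (- a * (real p * kap * E t)) * (- 1 / real p) / D t)) * (y0 * exp (kap * t))
          = kap * z t + lam * z t ^ (p+1)"
    proof -
      have "lam * z t ^ (p+1) = z t * (lam * y0 ^ p * E t / D t)" using zp[OF t] by (simp add: algebra_simps)
      also have "\<dots> = z t * (a * kap * E t / D t)" by (simp add: ak)
      finally show ?thesis using p by (simp add: z_def field_simps)
    qed
    ultimately show ?thesis by simp
  qed
  have lim: "(z \<longlongrightarrow> 0) at_top"
  proof -
    have E0: "(E \<longlongrightarrow> 0) at_top" unfolding E_def using exp_neg_lim[of "real p * kap"] p kap
      by (simp add: mult_pos_neg)
    have D1: "(D \<longlongrightarrow> 1 + a) at_top" unfolding D_def by (auto intro!: tendsto_eq_intros E0)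
    have "1 + a \<noteq> 0" using A by (simp add: a_def)
    then have W: "((\<lambda>t. D t powr (- 1 / real p)) \<longlongrightarrow> (1 + a) powr (- 1 / real p)) at_top"
      by (intro tendsto_powr D1 tendsto_const)
    have "((\<lambda>t. y0 * exp (kap * t) * D t powr (- 1 / real p)) \<longlongrightarrow> y0 * 0 * (1 + a) powr (- 1 / real p)) at_top"
      by (intro tendsto_mult tendsto_const W exp_neg_lim kap)
    then show ?thesis by (simp add: z_def)
  qed
  have inv: "lam / kap * z t ^ p > -1" if t: "t \<ge> 0" for t
  proof -
    have eq: "lam / kap * z t ^ p = a * E t / D t" using zp[OF t] by (simp add: a_def)
    have "a > -1" using A by (simp add: a_def)
    then have "a * E t > - D t" by (simp add: D_def algebra_simps)
    then have "a * E t / D t > -1" using Dpos[OF t] by (simp add: less_divide_eq)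
    then show ?thesis using eq by simp
  qed
  have "z 0 = y0" by (simp add: z_def D_def E_def)
  then show ?thesis using deriv lim inv by blast
qed



lemma F_formula:
  fixes v :: "'n::finite \<Rightarrow> real^'n"
  assumes "k \<ge> 1"
  shows "(\<Sum>r\<in>UNIV. kap r *\<^sub>R outer (v r) (v r)) *v x
                   + tensor_apply k (\<lambda>is. \<Sum>r\<in>UNIV. lam r * tensor_power (v r) is) x
       = (\<Sum>r\<in>UNIV. (kap r * (v r \<bullet> x) + lam r * (v r \<bullet> x) ^ (k - 1)) *\<^sub>R v r)"
  unfolding matrix_part tensor_part[OF assms] by (simp add: sum.distrib[symmetric] scaleR_add_left)

lemma main_common:
  fixes v :: "'n::finite \<Rightarrow> real^'n"
    and lam kap :: "'n \<Rightarrow> real"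
    and k :: nat
  assumes k3: "k \<ge> 3"
    and orth: "\<forall>r s. v r \<bullet> v s = (if r = s then 1 else 0)"
    and kneg: "\<forall>r. kap r < 0"
    and F: "F = (\<lambda>x. (\<Sum>r\<in>UNIV. kap r *\<^sub>R outer (v r) (v r)) *v x
                   + tensor_apply k (\<lambda>is. \<Sum>r\<in>UNIV. lam r * tensor_power (v r) is) x)"
    and R: "R = {x0. \<forall>r. lam r / kap r * (v r \<bullet> x0) ^ (k - 2) > -1}"
  shows "\<forall>x0\<in>R. (\<exists>x. is_forward_solution F x0 x) \<and>
          (\<forall>x. is_forward_solution F x0 x \<longrightarrow> (x \<longlongrightarrow> 0) at_top \<and> (\<forall>t\<ge>0. x t \<in> R))"
proof
  fix x0 assume x0: "x0 \<in> R"
  define p where "p = k - 2"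
  have p1: "p \<ge> 1" and kp: "k - 1 = p + 1" using k3 by (auto simp: p_def)
  have Fx: "F x = (\<Sum>r\<in>UNIV. (kap r * (v r \<bullet> x) + lam r * (v r \<bullet> x) ^ (p + 1)) *\<^sub>R v r)" for x
    unfolding F using F_formula[of k kap v x lam] k3 kp by simp
  have Fc: "v s \<bullet> F x = kap s * (v s \<bullet> x) + lam s * (v s \<bullet> x) ^ (p + 1)" for s x
    unfolding Fx by (rule inner_orth_sum[OF orth])
  have "\<forall>r. \<exists>z. z 0 = v r \<bullet> x0 \<and> (\<forall>t\<ge>0. (z has_real_derivative (kap r * z t + lam r * z t ^ (p+1))) (at t))
          \<and> (z \<longlongrightarrow> 0) at_top \<and> (\<forall>t\<ge>0. lam r / kap r * z t ^ p > -1)"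
    using scalar_sol[OF _ p1] kneg x0 by (simp add: R p_def)
  then obtain Z where Z0: "\<And>r. Z r 0 = v r \<bullet> x0"
    and Zd: "\<And>r t. t \<ge> 0 \<Longrightarrow> (Z r has_real_derivative (kap r * Z r t + lam r * Z r t ^ (p+1))) (at t)"
    and Zl: "\<And>r. (Z r \<longlongrightarrow> 0) at_top"
    and Zi: "\<And>r t. t \<ge> 0 \<Longrightarrow> lam r / kap r * Z r t ^ p > -1"
    by metis
  define X where "X = (\<lambda>t. \<Sum>r\<in>UNIV. Z r t *\<^sub>R v r)"
  have vX: "v r \<bullet> X t = Z r t" for r t
    unfolding X_def by (rule inner_orth_sum[OF orth])
  have solX: "is_forward_solution F x0 X"
    unfolding is_forward_solution_def
  proof (intro conjI allI impI)
    show "X 0 = x0" using orth_expand[OF orth, of x0] by (simp add: X_def Z0)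
  next
    fix t :: real assume t: "t \<ge> 0"
    have "(X has_vector_derivative (\<Sum>r\<in>UNIV. (kap r * Z r t + lam r * Z r t ^ (p+1)) *\<^sub>R v r)) (at t within {0..})"
      unfolding X_def
    proof (rule has_vector_derivative_sum)
      fix r :: 'n
      have "((\<lambda>t. Z r t *\<^sub>R v r) has_vector_derivative
          (Z r t *\<^sub>R 0 + (kap r * Z r t + lam r * Z r t ^ (p+1)) *\<^sub>R v r)) (at t within {0..})"
        by (rule has_vector_derivative_scaleR[OF has_field_derivative_at_within[OF Zd[OF t]]])
           (rule has_vector_derivative_const)
      then show "((\<lambda>t. Z r t *\<^sub>R v r) has_vector_derivative
          (kap r * Z r t + lam r * Z r t ^ (p+1)) *\<^sub>R v r) (at t within {0..})" by simp
    qed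
    moreover have "F (X t) = (\<Sum>r\<in>UNIV. (kap r * Z r t + lam r * Z r t ^ (p+1)) *\<^sub>R v r)"
      by (simp add: Fx vX)
    ultimately show "(X has_vector_derivative F (X t)) (at t within {0..})" by simp
  qed
  have XR: "X t \<in> R" if "t \<ge> 0" for t using Zi[OF that] by (simp add: R vX p_def)
  have Xl: "(X \<longlongrightarrow> 0) at_top"
  proof -
    have "(X \<longlongrightarrow> (\<Sum>r\<in>UNIV. 0 *\<^sub>R v r)) at_top"
      unfolding X_def by (intro tendsto_sum tendsto_scaleR Zl tendsto_const)
    then show ?thesis by simp
  qed
  show "(\<exists>x. is_forward_solution F x0 x) \<and>
          (\<forall>x. is_forward_solution F x0 x \<longrightarrow> (x \<longlongrightarrow> 0) at_top \<and> (\<forall>t\<ge>0. x t \<in> R))"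
  proof (intro conjI allI impI)
    show "\<exists>x. is_forward_solution F x0 x" using solX by blast
  next
    fix x assume sol: "is_forward_solution F x0 x"
    have eq: "x t = X t" if t: "t \<ge> 0" for t
    proof -
      have "v r \<bullet> x t = Z r t" for r
      proof -
        have dy: "\<forall>s\<ge>0. ((\<lambda>s. v r \<bullet> x s) has_real_derivative
                (kap r * (v r \<bullet> x s) + lam r * (v r \<bullet> x s) ^ (p+1))) (at s within {0..})"
        proof (intro allI impI)
          fix s :: real assume s: "s \<ge> 0"
          have "(x has_vector_derivative F (x s)) (at s within {0..})"
            using sol s unfolding is_forward_solution_def by blast
          from bounded_linear.has_vector_derivative[OF bounded_linear_inner_right this, of "v r"]
          show "((\<lambda>s. v r \<bullet> x s) has_real_derivative
                (kap r * (v r \<bullet> x s) + lam r * (v r \<bullet> x s) ^ (p+1))) (at s within {0..})"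
            by (simp add: Fc has_real_derivative_iff_has_vector_derivative)
        qed
        have dz: "\<forall>s\<ge>0. (Z r has_real_derivative (kap r * Z r s + lam r * Z r s ^ (p+1))) (at s within {0..})"
          using Zd by (blast intro: has_field_derivative_at_within)
        have "v r \<bullet> x 0 = Z r 0" using sol Z0 unfolding is_forward_solution_def by simp
        then show ?thesis using scalar_unique[OF dy dz _ t] by simp
      qed
      then show ?thesis using orth_expand[OF orth, of "x t"] by (simp add: X_def)
    qed
    show "(x \<longlongrightarrow> 0) at_top"
      by (rule Lim_transform_eventually[OF Xl], rule eventually_mono[OF eventually_ge_at_top[of 0]]) (simp add: eq)
    show "x t \<in> R" if "t \<ge> 0" for t unfolding eq[OF that] by (rule XR[OF that])
  qed
qed



theorem theorem2:
  fixes v :: "'n::finite \<Rightarrow> real^'n"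
    and lam kap :: "'n \<Rightarrow> real"
    and k :: nat
  assumes k3: "k \<ge> 3"
    and orthonormal: "\<forall>r s. v r \<bullet> v s = (if r = s then 1 else 0)"
    and kneg: "\<forall>r. kap r < 0"
  defines "p \<equiv> k - 2"
    and "F \<equiv> (\<lambda>x. (\<Sum>r\<in>UNIV. kap r *\<^sub>R outer (v r) (v r)) *v x
                   + tensor_apply k (\<lambda>is. \<Sum>r\<in>UNIV. lam r * tensor_power (v r) is) x)"
    and "Ipos \<equiv> {r. lam r > 0}"
    and "Ineg \<equiv> {r. lam r < 0}"
    and "c \<equiv> (\<lambda>r. if lam r > 0 then root (k - 2) (- kap r / lam r)
                   else - root (k - 2) (kap r / lam r))"
  shows
    "(even p \<longrightarrow>
       (let R = {x0. \<forall>r\<in>Ipos. \<bar>v r \<bullet> x0\<bar> < c r} in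
        \<forall>x0\<in>R. (\<exists>x. is_forward_solution F x0 x) \<and>
          (\<forall>x. is_forward_solution F x0 x \<longrightarrow>
                (x \<longlongrightarrow> 0) at_top \<and> (\<forall>t\<ge>0. x t \<in> R))))
     \<and>
     (odd p \<longrightarrow>
       (let R = {x0. (\<forall>r\<in>Ipos. v r \<bullet> x0 < c r) \<and> (\<forall>r\<in>Ineg. v r \<bullet> x0 > c r)} in
        \<forall>x0\<in>R. (\<exists>x. is_forward_solution F x0 x) \<and>
          (\<forall>x. is_forward_solution F x0 x \<longrightarrow>
                (x \<longlongrightarrow> 0) at_top \<and> (\<forall>t\<ge>0. x t \<in> R))))"
proof -
  define R0 where "R0 = {x0. \<forall>r. lam r / kap r * (v r \<bullet> x0) ^ (k - 2) > -1}"
  have main: "\<forall>x0\<in>R0. (\<exists>x. is_forward_solution F x0 x) \<and>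
          (\<forall>x. is_forward_solution F x0 x \<longrightarrow> (x \<longlongrightarrow> 0) at_top \<and> (\<forall>t\<ge>0. x t \<in> R0))"
    by (rule main_common[OF k3 orthonormal kneg meta_eq_to_obj_eq[OF F_def] R0_def])
  have p1: "k - 2 \<ge> 1" using k3 by simp
  have "{x0. \<forall>r\<in>Ipos. \<bar>v r \<bullet> x0\<bar> < c r} = R0" if ev: "even p"
  proof -
    have pt: "(lam r > 0 \<longrightarrow> \<bar>y\<bar> < c r) \<longleftrightarrow> lam r / kap r * y ^ (k - 2) > -1" for r y
      using region_even[of "kap r" "k - 2" "lam r" y] kneg ev p1 by (simp add: c_def p_def)
    show ?thesis unfolding R0_def Ipos_def using pt by auto
  qed
  moreover have "{x0. (\<forall>r\<in>Ipos. v r \<bullet> x0 < c r) \<and> (\<forall>r\<in>Ineg. v r \<bullet> x0 > c r)} = R0" if od: "odd p"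
  proof -
    have pt: "((lam r > 0 \<longrightarrow> y < c r) \<and> (lam r < 0 \<longrightarrow> y > c r)) \<longleftrightarrow> lam r / kap r * y ^ (k - 2) > -1" for r y
      using region_odd[of "kap r" "k - 2" "lam r" y] kneg od by (auto simp: c_def p_def)
    show ?thesis unfolding R0_def Ipos_def Ineg_def using pt by auto
  qed
  ultimately show ?thesis using main by (simp add: Let_def)
qed

end
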